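(* Let $\epsilon\in(0,1)$, $u_0\in\mathbb{R}$, and $h^*=\epsilon^2$. For every $h\in(0,h^*]$, let $(u_n)_{n\ge0}$ be a sequence of real numbers starting at $u_0$ and satisfying the implicit Euler scheme $$\frac{u_n-u_{n-1}}{h}+\frac{1}{\epsilon^2}\big(u_n^3-u_n\big)=0,\qquad n\ge 1.$$ Then: (i) if $u_0\in\{0,1,-1\}$, then $u_n=\mathrm{sign}(u_0)$ for all $n\ge1$; (ii) if $u_0\notin\{0,1,-1\}$, then $(u_n)$ is monotone and converges to $\mathrm{sign}(u_0)$ as $n\to\infty$.
   Context: The scheme discretizes the ODE $u'(t)+\frac{1}{\epsilon^2}(u^3-u)=0$, $u(0)=u_0$. For $h\le\epsilon^2$ each step equation has a unique real solution $u_n$, so the sequence is uniquely determined. Here $\mathrm{sign}(0)=0$. *)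

theory Defs
  imports "HOL-Analysis.Analysis"
begin

end

theory Submission
  imports Defs
begin

lemma st_pos: fixes a b k :: real
  assumes "0<k" "k\<le>1" "a = b + k*(b^3-b)" shows "0<a \<longleftrightarrow> 0<b"
proof -
  have e: "a = b*((1-k)+k*b^2)" using assms(3) by (simp add: algebra_simps power3_eq_cube power2_eq_square)
  show ?thesis
  proof (cases "b = 0")
    case True then show ?thesis using e by simp
  next
    case False
    then have "b^2 > 0" by simp
    then have "k*b^2 > 0" using assms by simp
    then have "(1-k)+k*b^2 > 0" using assms by linarith
    then show ?thesis using e by (simp add: zero_less_mult_iff)
  qed
qed

lemma st_one: fixes a b k :: real
  assumes "0<k" "k\<le>1" "a = b + k*(b^3-b)" shows "(1<a \<longleftrightarrow> 1<b) \<and> (a<1 \<longleftrightarrow> b<1)"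
proof -
  have e: "a - 1 = (b-1)*(k*b^2+k*b+1)" using assms(3) by (simp add: algebra_simps power3_eq_cube power2_eq_square)
  have "k*b^2+k*b+1 = k*(b+1/2)^2 + (1 - k/4)" by (simp add: algebra_simps power2_eq_square)
  moreover have "k*(b+1/2)^2 \<ge> 0" using assms by simp
  ultimately have c: "k*b^2+k*b+1 > 0" using assms by linarith
  have "0 < a - 1 \<longleftrightarrow> 0 < b - 1" using e c by (simp add: zero_less_mult_iff)
  moreover have "a - 1 < 0 \<longleftrightarrow> b - 1 < 0" using e c by (simp add: mult_less_0_iff)
  ultimately show ?thesis by linarith
qed

lemma st_diff: fixes a b k :: real
  assumes "a = b + k*(b^3-b)" shows "a - b = k*b*(b-1)*(b+1)"
  using assms by (simp add: algebra_simps power3_eq_cube)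

lemma core:
  fixes u :: "nat \<Rightarrow> real" and k :: real
  assumes k: "0<k" "k\<le>1" and st: "\<And>n. u n = u (Suc n) + k*(u (Suc n)^3 - u (Suc n))"
    and pos: "0 < u 0" and ne: "u 0 \<noteq> 1"
  shows "(mono u \<or> antimono u) \<and> u \<longlonglongrightarrow> 1"
proof -
  have P: "0 < u n" for n
  proof (induction n)
    case 0 then show ?case using pos .
  next
    case (Suc n) then show ?case using st_pos[OF k st[of n]] by blast
  qed
  have lim: "L = 1" if L: "u \<longlonglongrightarrow> L" and bd: "\<And>n. min (u 0) 1 \<le> u n" for L
  proof -
    have "(\<lambda>n. u (Suc n)) \<longlonglongrightarrow> L" using L by (rule LIMSEQ_Suc)
    then have "(\<lambda>n. u (Suc n) + k*(u (Suc n)^3 - u (Suc n))) \<longlonglongrightarrow> L + k*(L^3-L)"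
      by (intro tendsto_intros)
    moreover have "(\<lambda>n. u (Suc n) + k*(u (Suc n)^3 - u (Suc n))) = u" by (rule ext) (rule st[symmetric])
    ultimately have "u \<longlonglongrightarrow> L + k*(L^3-L)" by simp
    then have "L = L + k*(L^3-L)" using L LIMSEQ_unique by blast
    then have "L^3 - L = 0" using k by simp
    then have "L*(L-1)*(L+1) = 0" by (simp add: algebra_simps power3_eq_cube)
    moreover have "L \<ge> min (u 0) 1"
      by (rule LIMSEQ_le_const[OF L]) (use bd in blast)
    ultimately show "L = 1" using pos by (auto simp: min_def split: if_splits)
  qed
  have D: "u n - u (Suc n) = k*u (Suc n)*(u (Suc n)-1)*(u (Suc n)+1)" for n
    by (rule st_diff[OF st])
  show ?thesis
  proof (cases "u 0 < 1")
    case True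
    have B: "u n < 1" for n
    proof (induction n)
      case 0 then show ?case using True .
    next
      case (Suc n) then show ?case using st_one[OF k st[of n]] by blast
    qed
    have inc: "u n \<le> u (Suc n)" for n
    proof -
      have "k*u (Suc n)*(u (Suc n)-1)*(u (Suc n)+1) \<le> 0"
        using k P[of "Suc n"] B[of "Suc n"]
        by (intro mult_nonpos_nonneg mult_nonneg_nonpos) auto
      then show ?thesis using D[of n] by linarith
    qed
    then have m: "mono u" by (simp add: mono_iff_le_Suc)
    have "bdd_above (range u)" using B by (intro bdd_aboveI[of _ 1]) (auto simp: less_imp_le)
    then have "convergent u" using m LIMSEQ_incseq_SUP by (auto simp: convergent_def)
    then obtain L where L: "u \<longlonglongrightarrow> L" by (auto simp: convergent_def)
    have "min (u 0) 1 \<le> u n" for n using m[THEN monoD, of 0 n] by simp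
    then have "L = 1" using lim L by blast
    then show ?thesis using L m by simp
  next
    case False
    then have G: "1 < u 0" using ne by simp
    have B: "1 < u n" for n
    proof (induction n)
      case 0 then show ?case using G .
    next
      case (Suc n) then show ?case using st_one[OF k st[of n]] by blast
    qed
    have dec: "u (Suc n) \<le> u n" for n
    proof -
      have "k*u (Suc n)*(u (Suc n)-1)*(u (Suc n)+1) \<ge> 0"
        using k P[of "Suc n"] B[of "Suc n"] by simp
      then show ?thesis using D[of n] by linarith
    qed
    then have m: "antimono u" by (simp add: antimono_iff_le_Suc)
    have "bdd_below (range u)" using P by (intro bdd_belowI[of _ 0]) (auto simp: less_imp_le)
    then have "convergent u" using m LIMSEQ_decseq_INF by (auto simp: convergent_def)
    then obtain L where L: "u \<longlonglongrightarrow> L" by (auto simp: convergent_def)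
    have "min (u 0) 1 \<le> u n" for n using B[of n] by simp
    then have "L = 1" using lim L by blast
    then show ?thesis using L m by simp
  qed
qed

lemma const_seq:
  fixes u :: "nat \<Rightarrow> real" and k :: real
  assumes k: "0<k" "k\<le>1" and st: "\<And>n. u n = u (Suc n) + k*(u (Suc n)^3 - u (Suc n))"
  shows "u 0 = 1 \<Longrightarrow> u n = 1" and "u 0 = 0 \<Longrightarrow> u n = 0"
proof -
  have stn: "- u n = - u (Suc n) + k*((- u (Suc n))^3 - (- u (Suc n)))" for n
    using st[of n] by (simp add: algebra_simps)
  show "u 0 = 1 \<Longrightarrow> u n = 1"
  proof (induction n)
    case (Suc n) then have "u n = 1" by simp
    then show ?case using st_one[OF k st[of n]] by (smt (verit))
  qed simp
  show "u 0 = 0 \<Longrightarrow> u n = 0"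
  proof (induction n)
    case (Suc n) then show ?case using st_pos[OF k st[of n]] st_pos[OF k stn[of n]]
      by (smt (verit))
  qed simp
qed

theorem theorem2p4:
  fixes eps h u0 :: real and u :: "nat \<Rightarrow> real"
  assumes eps: "0 < eps" "eps < 1"
    and h: "0 < h" "h \<le> eps^2"
    and init: "u 0 = u0"
    and scheme: "\<And>n. n \<ge> 1 \<Longrightarrow>
        (u n - u (n - 1)) / h + (1 / eps^2) * (u n ^ 3 - u n) = 0"
  shows "(u0 \<in> {0, 1, -1} \<longrightarrow> (\<forall>n\<ge>1. u n = sgn u0))
       \<and> (u0 \<notin> {0, 1, -1} \<longrightarrow> ((mono u \<or> antimono u) \<and> u \<longlonglongrightarrow> sgn u0))"
proof -
  define k where "k = h / eps^2"
  have k: "0 < k" "k \<le> 1" using eps h by (auto simp: k_def)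
  have st: "u n = u (Suc n) + k*(u (Suc n)^3 - u (Suc n))" for n
  proof -
    have "(u (Suc n) - u n) / h + (1 / eps^2) * (u (Suc n) ^ 3 - u (Suc n)) = 0"
      using scheme[of "Suc n"] by simp
    then have "h * ((u (Suc n) - u n) / h + (1 / eps^2) * (u (Suc n) ^ 3 - u (Suc n))) = 0" by simp
    moreover have "h * ((u (Suc n) - u n) / h) = u (Suc n) - u n" using h by simp
    moreover have "h * ((1 / eps^2) * (u (Suc n) ^ 3 - u (Suc n))) = k * (u (Suc n) ^ 3 - u (Suc n))"
      by (simp add: k_def)
    ultimately have "(u (Suc n) - u n) + k * (u (Suc n) ^ 3 - u (Suc n)) = 0"
      by (simp only: distrib_left)
    then show ?thesis by linarith
  qed
  define v where "v n = - u n" for n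
  have stv: "v n = v (Suc n) + k*(v (Suc n)^3 - v (Suc n))" for n
    using st[of n] by (simp add: v_def algebra_simps)
  have uv: "u = (\<lambda>n. - v n)" by (simp add: v_def)
  show ?thesis
  proof (rule conjI; rule impI)
    assume "u0 \<in> {0, 1, -1}"
    then consider "u0 = 0" | "u0 = 1" | "u0 = -1" by blast
    then show "\<forall>n\<ge>1. u n = sgn u0"
    proof cases
      case 1 then show ?thesis using const_seq(2)[of k u, OF k st] init by simp
    next
      case 2 then show ?thesis using const_seq(1)[of k u, OF k st] init by simp
    next
      case 3 then show ?thesis using const_seq(1)[of k v, OF k stv] init by (simp add: v_def)
    qed
  next
    assume ne: "u0 \<notin> {0, 1, -1}"
    show "(mono u \<or> antimono u) \<and> u \<longlonglongrightarrow> sgn u0"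
    proof (cases "u0 > 0")
      case True
      then show ?thesis using core[of k u, OF k st] ne init by simp
    next
      case False
      then have "v 0 > 0" "v 0 \<noteq> 1" using ne init by (auto simp: v_def)
      then have c: "(mono v \<or> antimono v) \<and> v \<longlonglongrightarrow> 1" using core[of k v, OF k stv] by blast
      have "u \<longlonglongrightarrow> -1" unfolding uv using c by (intro tendsto_minus_cancel_left[THEN iffD1]) simp
      moreover have "mono u \<or> antimono u" using c unfolding uv by (auto simp: mono_def antimono_def)
      moreover have "sgn u0 = -1" using False ne by (auto simp: sgn_if)
      ultimately show ?thesis by simp
    qed
  qed
qed

end
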